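(* Let $(\Phi,D)$ and $(\Psi,E)$ be domain-free s-continuous information algebras. Then $([\Phi\rightarrow\Psi]_c,D\times E)$, with pointwise combination $(f\otimes g)(\phi)=f(\phi)\otimes g(\phi)$ and focusing $f^{\Rightarrow(x,y)}(\phi)=(f(\phi^{\Rightarrow x}))^{\Rightarrow y}$, is a domain-free s-continuous information algebra.
   Context: A domain-free information algebra $(\Phi,D)$ consists of a set $\Phi$, a lattice $D$, a combination $\otimes$ and a focusing $(\psi,x)\mapsto\psi^{\Rightarrow x}$ ($x\in D$) such that: $\otimes$ is associative, commutative with neutral element $e$; $(\psi^{\Rightarrow y})^{\Rightarrow x}=\psi^{\Rightarrow x\wedge y}$; $(\phi^{\Rightarrow x}\otimes\psi)^{\Rightarrow x}=\phi^{\Rightarrow x}\otimes\psi^{\Rightarrow x}$; every $\psi$ has some $x$ with $\psi^{\Rightarrow x}=\psi$; $\psi\otimes\psi^{\Rightarrow x}=\psi$. Order: $\psi\le\phi$ iff $\psi\otimes\phi=\phi$; suprema refer to this order. $a\ll b$ means: for every directed $X$ with $b\le\vee X$ there is $c\in X$ with $a\le c$. $(\Phi,D)$, with $D$ having a top element, is continuous (resp. s-continuous) if there exists $\Gamma\subseteq\Phi$, closed under combination and containing $e$, such that every directed subset of $\Gamma$ has a supremum in $\Phi$ and $\phi=\vee\{\psi\in\Gamma:\psi\ll\phi\}$ for all $\phi$ (resp. $\phi^{\Rightarrow x}=\vee\{\psi\in\Gamma:\psi=\psi^{\Rightarrow x}\ll\phi\}$ for all $\phi,x$). $[\Phi\rightarrow\Psi]_c$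 denotes the set of maps $f:\Phi\to\Psi$ with $f(\vee X)=\vee f(X)$ for every directed $X\subseteq\Phi$; $D\times E$ is the product lattice. *)

theory Defs
  imports Main "HOL-Library.Product_Order" "HOL-Library.FuncSet"
begin

definition info_alg ::
  "'a set \<Rightarrow> ('a \<Rightarrow> 'a \<Rightarrow> 'a) \<Rightarrow> 'a \<Rightarrow> ('a \<Rightarrow> 'd::lattice \<Rightarrow> 'a) \<Rightarrow> bool" where
  "info_alg Phi cmb e foc \<longleftrightarrow>
     (\<forall>a\<in>Phi. \<forall>b\<in>Phi. cmb a b \<in> Phi) \<and> e \<in> Phi \<and>
     (\<forall>a\<in>Phi. \<forall>x. foc a x \<in> Phi) \<and>
     (\<forall>a\<in>Phi. \<forall>b\<in>Phi. \<forall>c\<in>Phi. cmb (cmb a b) c = cmb a (cmb b c)) \<and>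
     (\<forall>a\<in>Phi. \<forall>b\<in>Phi. cmb a b = cmb b a) \<and>
     (\<forall>a\<in>Phi. cmb a e = a) \<and>
     (\<forall>a\<in>Phi. \<forall>x y. foc (foc a y) x = foc a (inf x y)) \<and>
     (\<forall>a\<in>Phi. \<forall>b\<in>Phi. \<forall>x. foc (cmb (foc a x) b) x = cmb (foc a x) (foc b x)) \<and>
     (\<forall>a\<in>Phi. \<exists>x. foc a x = a) \<and>
     (\<forall>a\<in>Phi. \<forall>x. cmb a (foc a x) = a)"

definition ia_le :: "('a \<Rightarrow> 'a \<Rightarrow> 'a) \<Rightarrow> 'a \<Rightarrow> 'a \<Rightarrow> bool" where
  "ia_le cmb a b \<longleftrightarrow> cmb a b = b"

definition ia_is_sup :: "'a set \<Rightarrow> ('a \<Rightarrow> 'a \<Rightarrow> 'a) \<Rightarrow> 'a set \<Rightarrow> 'a \<Rightarrow> bool" where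
  "ia_is_sup Phi cmb X s \<longleftrightarrow> s \<in> Phi \<and> (\<forall>a\<in>X. ia_le cmb a s) \<and>
     (\<forall>u\<in>Phi. (\<forall>a\<in>X. ia_le cmb a u) \<longrightarrow> ia_le cmb s u)"

definition ia_directed :: "'a set \<Rightarrow> ('a \<Rightarrow> 'a \<Rightarrow> 'a) \<Rightarrow> 'a set \<Rightarrow> bool" where
  "ia_directed Phi cmb X \<longleftrightarrow> X \<subseteq> Phi \<and> X \<noteq> {} \<and>
     (\<forall>a\<in>X. \<forall>b\<in>X. \<exists>c\<in>X. ia_le cmb a c \<and> ia_le cmb b c)"

definition ia_way_below :: "'a set \<Rightarrow> ('a \<Rightarrow> 'a \<Rightarrow> 'a) \<Rightarrow> 'a \<Rightarrow> 'a \<Rightarrow> bool" where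
  "ia_way_below Phi cmb a b \<longleftrightarrow>
     (\<forall>X s. ia_directed Phi cmb X \<longrightarrow> ia_is_sup Phi cmb X s \<longrightarrow> ia_le cmb b s \<longrightarrow>
        (\<exists>c\<in>X. ia_le cmb a c))"

definition s_continuous ::
  "'a set \<Rightarrow> ('a \<Rightarrow> 'a \<Rightarrow> 'a) \<Rightarrow> 'a \<Rightarrow> ('a \<Rightarrow> 'd::lattice \<Rightarrow> 'a) \<Rightarrow> bool" where
  "s_continuous Phi cmb e foc \<longleftrightarrow>
     (\<exists>t::'d. \<forall>x. x \<le> t) \<and>
     (\<exists>Gamma. Gamma \<subseteq> Phi \<and> e \<in> Gamma \<and>
        (\<forall>a\<in>Gamma. \<forall>b\<in>Gamma. cmb a b \<in> Gamma) \<and>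
        (\<forall>X. X \<subseteq> Gamma \<longrightarrow> ia_directed Phi cmb X \<longrightarrow> (\<exists>s. ia_is_sup Phi cmb X s)) \<and>
        (\<forall>phi\<in>Phi. \<forall>x.
           ia_is_sup Phi cmb {psi \<in> Gamma. foc psi x = psi \<and> ia_way_below Phi cmb psi phi}
             (foc phi x)))"

definition cont_maps ::
  "'a set \<Rightarrow> ('a \<Rightarrow> 'a \<Rightarrow> 'a) \<Rightarrow> 'b set \<Rightarrow> ('b \<Rightarrow> 'b \<Rightarrow> 'b) \<Rightarrow> ('a \<Rightarrow> 'b) set" where
  "cont_maps Phi cP Psi cQ =
     {f \<in> extensional Phi. f ` Phi \<subseteq> Psi \<and>
        (\<forall>X s. ia_directed Phi cP X \<longrightarrow> ia_is_sup Phi cP X s \<longrightarrow>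
           ia_is_sup Psi cQ (f ` X) (f s))}"

definition fun_comb :: "'a set \<Rightarrow> ('b \<Rightarrow> 'b \<Rightarrow> 'b) \<Rightarrow> ('a \<Rightarrow> 'b) \<Rightarrow> ('a \<Rightarrow> 'b) \<Rightarrow> ('a \<Rightarrow> 'b)" where
  "fun_comb Phi cQ f g = (\<lambda>phi\<in>Phi. cQ (f phi) (g phi))"

definition fun_unit :: "'a set \<Rightarrow> 'b \<Rightarrow> ('a \<Rightarrow> 'b)" where
  "fun_unit Phi eQ = (\<lambda>phi\<in>Phi. eQ)"

definition fun_focus ::
  "'a set \<Rightarrow> ('a \<Rightarrow> 'd \<Rightarrow> 'a) \<Rightarrow> ('b \<Rightarrow> 'e \<Rightarrow> 'b) \<Rightarrow> ('a \<Rightarrow> 'b) \<Rightarrow> 'd \<times> 'e \<Rightarrow> ('a \<Rightarrow> 'b)" where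
  "fun_focus Phi fP fQ f xy = (\<lambda>phi\<in>Phi. fQ (f (fP phi (fst xy))) (snd xy))"

end

theory Submission
  imports Defs
begin



locale ia0 =
  fixes Phi :: "'a set" and cmb :: "'a \<Rightarrow> 'a \<Rightarrow> 'a" and e :: 'a and foc :: "'a \<Rightarrow> 'd::lattice \<Rightarrow> 'a"
  assumes IA: "info_alg Phi cmb e foc"
begin

abbreviation le where "le \<equiv> ia_le cmb"
abbreviation issup where "issup \<equiv> ia_is_sup Phi cmb"
abbreviation dir where "dir \<equiv> ia_directed Phi cmb"
abbreviation wb where "wb \<equiv> ia_way_below Phi cmb"

lemma cl: "a\<in>Phi \<Longrightarrow> b\<in>Phi \<Longrightarrow> cmb a b \<in> Phi" using IA unfolding info_alg_def by blast
lemma e_in: "e \<in> Phi" using IA unfolding info_alg_def by blast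
lemma foc_in: "a\<in>Phi \<Longrightarrow> foc a x \<in> Phi" using IA unfolding info_alg_def by blast
lemma assoc: "a\<in>Phi \<Longrightarrow> b\<in>Phi \<Longrightarrow> c\<in>Phi \<Longrightarrow> cmb (cmb a b) c = cmb a (cmb b c)"
  using IA unfolding info_alg_def by blast
lemma comm: "a\<in>Phi \<Longrightarrow> b\<in>Phi \<Longrightarrow> cmb a b = cmb b a" using IA unfolding info_alg_def by blast
lemma neut: "a\<in>Phi \<Longrightarrow> cmb a e = a" using IA unfolding info_alg_def by blast
lemma neut2: "a\<in>Phi \<Longrightarrow> cmb e a = a" using neut comm e_in by metis
lemma foc_foc: "a\<in>Phi \<Longrightarrow> foc (foc a y) x = foc a (inf x y)" using IA unfolding info_alg_def by blast
lemma foc_cmb: "a\<in>Phi \<Longrightarrow> b\<in>Phi \<Longrightarrow> foc (cmb (foc a x) b) x = cmb (foc a x) (foc b x)"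
  using IA unfolding info_alg_def by blast
lemma foc_ex: "a\<in>Phi \<Longrightarrow> \<exists>x. foc a x = a" using IA unfolding info_alg_def by blast
lemma foc_abs: "a\<in>Phi \<Longrightarrow> cmb a (foc a x) = a" using IA unfolding info_alg_def by blast

lemma idem: "a\<in>Phi \<Longrightarrow> cmb a a = a"
  using foc_ex foc_abs by metis
lemma foc_idem: "a\<in>Phi \<Longrightarrow> foc (foc a x) x = foc a x" by (simp add: foc_foc)

lemma le_refl: "a\<in>Phi \<Longrightarrow> le a a" by (simp add: ia_le_def idem)
lemma le_trans: "a\<in>Phi \<Longrightarrow> b\<in>Phi \<Longrightarrow> c\<in>Phi \<Longrightarrow> le a b \<Longrightarrow> le b c \<Longrightarrow> le a c"
  unfolding ia_le_def by (metis assoc)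
lemma le_antisym: "a\<in>Phi \<Longrightarrow> b\<in>Phi \<Longrightarrow> le a b \<Longrightarrow> le b a \<Longrightarrow> a = b"
  unfolding ia_le_def by (metis comm)
lemma le_e: "a\<in>Phi \<Longrightarrow> le e a" by (simp add: ia_le_def neut2)
lemma ub1: "a\<in>Phi \<Longrightarrow> b\<in>Phi \<Longrightarrow> le a (cmb a b)"
  unfolding ia_le_def by (metis assoc idem)
lemma ub2: "a\<in>Phi \<Longrightarrow> b\<in>Phi \<Longrightarrow> le b (cmb a b)"
  using ub1 comm by metis
lemma lub: "a\<in>Phi \<Longrightarrow> b\<in>Phi \<Longrightarrow> c\<in>Phi \<Longrightarrow> le a c \<Longrightarrow> le b c \<Longrightarrow> le (cmb a b) c"
  unfolding ia_le_def by (metis assoc)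
lemma le_cmb_iff: "a\<in>Phi \<Longrightarrow> b\<in>Phi \<Longrightarrow> le b a \<Longrightarrow> cmb a b = a"
  unfolding ia_le_def by (metis comm)

lemma foc_le: "a\<in>Phi \<Longrightarrow> le (foc a x) a"
  unfolding ia_le_def by (metis comm foc_abs foc_in)
lemma foc_mono: assumes "a\<in>Phi" "b\<in>Phi" "le a b" shows "le (foc a x) (foc b x)"
proof -
  have "cmb (foc a x) (cmb a b) = cmb a b"
    using assms by (metis assoc comm foc_abs foc_in)
  hence "foc (cmb a b) x = cmb (foc a x) (foc (cmb a b) x)"
    using foc_cmb[of a "cmb a b" x] assms cl by metis
  thus ?thesis using assms unfolding ia_le_def by metis
qed
lemma foc_e: "foc e x = e" using foc_abs[OF e_in, of x] neut2 foc_in e_in by metis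
lemma foc_cmb_fix: "a\<in>Phi \<Longrightarrow> b\<in>Phi \<Longrightarrow> foc a x = a \<Longrightarrow> foc b x = b \<Longrightarrow> foc (cmb a b) x = cmb a b"
  using foc_cmb by metis

lemma sup_unique: "issup X s \<Longrightarrow> issup X t \<Longrightarrow> s = t"
  unfolding ia_is_sup_def using le_antisym by blast
lemma sup_max: "m\<in>X \<Longrightarrow> m\<in>Phi \<Longrightarrow> (\<forall>a\<in>X. le a m) \<Longrightarrow> issup X m"
  unfolding ia_is_sup_def by blast
lemma sup_in: "issup X s \<Longrightarrow> s \<in> Phi" unfolding ia_is_sup_def by blast
lemma sup_ub: "issup X s \<Longrightarrow> a \<in> X \<Longrightarrow> le a s" unfolding ia_is_sup_def by blast
lemma sup_least: "issup X s \<Longrightarrow> u \<in> Phi \<Longrightarrow> (\<And>a. a\<in>X \<Longrightarrow> le a u) \<Longrightarrow> le s u"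
  unfolding ia_is_sup_def by blast
lemma dir_sub: "dir X \<Longrightarrow> X \<subseteq> Phi" unfolding ia_directed_def by blast

lemma wb_le: "wb a b \<Longrightarrow> b\<in>Phi \<Longrightarrow> le a b"
proof -
  assume w: "wb a b" and b: "b\<in>Phi"
  have "dir {b}" using b le_refl unfolding ia_directed_def by auto
  moreover have "issup {b} b" using b le_refl sup_max by auto
  ultimately show ?thesis using w b le_refl unfolding ia_way_below_def by blast
qed
lemma wb_mono: assumes "a'\<in>Phi" "a\<in>Phi" "b\<in>Phi" "b'\<in>Phi" "le a' a" "wb a b" "le b b'"
  shows "wb a' b'"
  unfolding ia_way_below_def
proof (intro allI impI)
  fix X s assume X: "dir X" "issup X s" "le b' s"
  hence "le b s" using assms le_trans sup_in by blast
  then obtain c where "c\<in>X" "le a c" using assms X unfolding ia_way_below_def by blast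
  thus "\<exists>c\<in>X. le a' c" using assms le_trans dir_sub X by blast
qed
lemma wb_e: "wb e b" unfolding ia_way_below_def ia_directed_def
  by (meson e_in le_e subsetD equals0I)
lemma wb_join: assumes "a\<in>Phi" "b\<in>Phi" "wb a c" "wb b c" shows "wb (cmb a b) c"
  unfolding ia_way_below_def
proof (intro allI impI)
  fix X s assume X: "dir X" "issup X s" "le c s"
  obtain c1 where c1: "c1\<in>X" "le a c1" using assms X unfolding ia_way_below_def by blast
  obtain c2 where c2: "c2\<in>X" "le b c2" using assms X unfolding ia_way_below_def by blast
  obtain c3 where c3: "c3\<in>X" "le c1 c3" "le c2 c3" using X c1 c2 unfolding ia_directed_def by blast
  have "X \<subseteq> Phi" using X dir_sub by auto
  hence "le (cmb a b) c3" using c1 c2 c3 assms le_trans lub by (meson subsetD)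
  thus "\<exists>c\<in>X. le (cmb a b) c" using c3 by blast
qed

end



locale ia = ia0 Phi cmb e foc for Phi :: "'a set" and cmb and e and foc :: "'a \<Rightarrow> 'd::lattice \<Rightarrow> 'a" +
  assumes SC: "s_continuous Phi cmb e foc"
begin

definition tp :: "'d::lattice" where "tp = (SOME t. \<forall>x. x \<le> t)"
lemma tp: "x \<le> tp"
  using someI_ex[of "\<lambda>t::'d. \<forall>x. x \<le> t"] SC unfolding s_continuous_def tp_def by blast

definition Gam where "Gam = (SOME Gamma. Gamma \<subseteq> Phi \<and> e \<in> Gamma \<and>
        (\<forall>a\<in>Gamma. \<forall>b\<in>Gamma. cmb a b \<in> Gamma) \<and>
        (\<forall>X. X \<subseteq> Gamma \<longrightarrow> ia_directed Phi cmb X \<longrightarrow> (\<exists>s. ia_is_sup Phi cmb X s)) \<and>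
        (\<forall>phi\<in>Phi. \<forall>x.
           ia_is_sup Phi cmb {psi \<in> Gamma. foc psi x = psi \<and> ia_way_below Phi cmb psi phi}
             (foc phi x)))"

lemma Gam: "Gam \<subseteq> Phi \<and> e \<in> Gam \<and>
        (\<forall>a\<in>Gam. \<forall>b\<in>Gam. cmb a b \<in> Gam) \<and>
        (\<forall>X. X \<subseteq> Gam \<longrightarrow> dir X \<longrightarrow> (\<exists>s. issup X s)) \<and>
        (\<forall>phi\<in>Phi. \<forall>x. issup {psi \<in> Gam. foc psi x = psi \<and> wb psi phi} (foc phi x))"
  unfolding Gam_def
  by (rule someI_ex) (use SC in \<open>unfold s_continuous_def, blast\<close>)

lemma Gam_sub: "Gam \<subseteq> Phi" using Gam by blast
lemma Gam_e: "e \<in> Gam" using Gam by blast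
lemma Gam_cl: "a\<in>Gam \<Longrightarrow> b\<in>Gam \<Longrightarrow> cmb a b \<in> Gam" using Gam by blast
lemma Gam_sup: "X \<subseteq> Gam \<Longrightarrow> dir X \<Longrightarrow> \<exists>s. issup X s" using Gam by blast
lemma Gam_approx: "phi\<in>Phi \<Longrightarrow> issup {psi \<in> Gam. foc psi x = psi \<and> wb psi phi} (foc phi x)"
  using Gam by blast

lemma foc_top: "a\<in>Phi \<Longrightarrow> foc a tp = a"
proof -
  assume a: "a\<in>Phi"
  obtain x where x: "foc a x = a" using foc_ex a by blast
  have "foc a tp = foc (foc a x) tp" using x by simp
  also have "\<dots> = foc a (inf tp x)" using a foc_foc by simp
  also have "\<dots> = foc a x" using tp[of x] by (simp add: inf_absorb2)
  finally show ?thesis using x by simp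
qed

lemma approx_top: "c\<in>Phi \<Longrightarrow> issup {psi \<in> Gam. wb psi c} c"
proof -
  assume c: "c\<in>Phi"
  have "{psi \<in> Gam. foc psi tp = psi \<and> wb psi c} = {psi \<in> Gam. wb psi c}"
    using foc_top Gam_sub by blast
  thus ?thesis using Gam_approx[OF c, of tp] foc_top[OF c] by simp
qed

lemma dcpo: assumes X: "dir X" shows "\<exists>s. issup X s"
proof -
  define B where "B = {psi \<in> Gam. \<exists>c\<in>X. wb psi c}"
  have XP: "X \<subseteq> Phi" using X dir_sub by auto
  have "dir B"
    unfolding ia_directed_def
  proof (intro conjI ballI)
    show "B \<subseteq> Phi" using Gam_sub B_def by auto
    show "B \<noteq> {}" using X Gam_e wb_e unfolding B_def ia_directed_def by blast
  next
    fix a b assume "a\<in>B" "b\<in>B"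
    then obtain c1 c2 where "a\<in>Gam" "b\<in>Gam" "c1\<in>X" "c2\<in>X" "wb a c1" "wb b c2" unfolding B_def by blast
    moreover obtain c3 where "c3\<in>X" "le c1 c3" "le c2 c3" using X \<open>c1\<in>X\<close> \<open>c2\<in>X\<close> unfolding ia_directed_def by blast
    moreover have "c1\<in>Phi" "c2\<in>Phi" "c3\<in>Phi" "a\<in>Phi" "b\<in>Phi" using XP Gam_sub calculation by auto
    ultimately have "wb a c3" "wb b c3" using wb_mono[of a a c1 c3] wb_mono[of b b c2 c3] le_refl by auto
    hence "wb (cmb a b) c3" using wb_join \<open>a\<in>Gam\<close> \<open>b\<in>Gam\<close> Gam_sub by blast
    hence "cmb a b \<in> B" using \<open>c3\<in>X\<close> Gam_cl \<open>a\<in>Gam\<close> \<open>b\<in>Gam\<close> unfolding B_def by blast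
    moreover have "le a (cmb a b)" "le b (cmb a b)" using ub1 ub2 \<open>a\<in>Gam\<close> \<open>b\<in>Gam\<close> Gam_sub by blast+
    ultimately show "\<exists>c\<in>B. le a c \<and> le b c" by blast
  qed
  moreover have "B \<subseteq> Gam" unfolding B_def by auto
  ultimately obtain s where s: "issup B s" using Gam_sup by blast
  have "issup X s"
    unfolding ia_is_sup_def
  proof (intro conjI ballI impI)
    show "s\<in>Phi" using s sup_in by auto
  next
    fix c assume "c\<in>X"
    hence "c\<in>Phi" using XP by auto
    show "le c s"
      using approx_top[OF \<open>c\<in>Phi\<close>] apply (rule sup_least)
      using sup_in[OF s] apply simp
      using sup_ub[OF s] \<open>c\<in>X\<close> unfolding B_def by blast
  next
    fix u assume u: "u\<in>Phi" "\<forall>a\<in>X. le a u"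
    show "le s u"
    proof (rule sup_least[OF s u(1)])
      fix a assume "a\<in>B"
      then obtain c where "c\<in>X" "wb a c" "a\<in>Gam" unfolding B_def by blast
      moreover have "c\<in>Phi" "a\<in>Phi" using XP Gam_sub calculation by auto
      ultimately show "le a u" using wb_le[of a c] le_trans[of a c u] u by auto
    qed
  qed
  thus ?thesis by blast
qed

lemma interp: assumes "b\<in>Phi" "z\<in>Phi" "wb b z" shows "\<exists>b'\<in>Gam. wb b b' \<and> wb b' z"
proof -
  define C where "C = {p\<in>Gam. \<exists>q\<in>Gam. wb p q \<and> wb q z}"
  have "dir C"
    unfolding ia_directed_def
  proof (intro conjI ballI)
    show "C \<subseteq> Phi" using Gam_sub C_def by auto
    show "C \<noteq> {}" using Gam_e wb_e unfolding C_def by blast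
  next
    fix a b assume "a\<in>C" "b\<in>C"
    then obtain q1 q2 where q: "a\<in>Gam" "b\<in>Gam" "q1\<in>Gam" "q2\<in>Gam" "wb a q1" "wb b q2" "wb q1 z" "wb q2 z"
      unfolding C_def by blast
    have P: "a\<in>Phi" "b\<in>Phi" "q1\<in>Phi" "q2\<in>Phi" using q Gam_sub by auto
    have "wb a (cmb q1 q2)" using wb_mono[of a a q1 "cmb q1 q2"] P q le_refl ub1 cl by blast
    moreover have "wb b (cmb q1 q2)" using wb_mono[of b b q2 "cmb q1 q2"] P q le_refl ub2 cl by blast
    ultimately have "wb (cmb a b) (cmb q1 q2)" using wb_join P by blast
    moreover have "wb (cmb q1 q2) z" using wb_join P q by blast
    ultimately have "cmb a b \<in> C" using Gam_cl q unfolding C_def by blast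
    moreover have "le a (cmb a b)" "le b (cmb a b)" using ub1 ub2 P by blast+
    ultimately show "\<exists>c\<in>C. le a c \<and> le b c" by blast
  qed
  moreover have "C \<subseteq> Gam" unfolding C_def by auto
  ultimately obtain s where s: "issup C s" using Gam_sup by blast
  have "le z s"
  proof (rule sup_least[OF approx_top[OF assms(2)] sup_in[OF s]])
    fix q assume q: "q \<in> {psi \<in> Gam. wb psi z}"
    hence "q\<in>Phi" using Gam_sub by auto
    show "le q s"
    proof (rule sup_least[OF approx_top[OF \<open>q\<in>Phi\<close>] sup_in[OF s]])
      fix p assume "p \<in> {psi \<in> Gam. wb psi q}"
      hence "p\<in>C" using q unfolding C_def by blast
      thus "le p s" using sup_ub[OF s] by blast
    qed
  qed
  then obtain c where c: "c\<in>C" "le b c" using assms \<open>dir C\<close> s unfolding ia_way_below_def by blast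
  then obtain q where q: "q\<in>Gam" "wb c q" "wb q z" "c\<in>Gam" unfolding C_def by blast
  have "wb b q" using wb_mono[of b c q q] q c assms Gam_sub le_refl by blast
  thus ?thesis using q by blast
qed

lemma dir_image_mono: assumes "dir X" "\<And>c. c\<in>X \<Longrightarrow> g c \<in> Phi"
  "\<And>a b. a\<in>X \<Longrightarrow> b\<in>X \<Longrightarrow> le a b \<Longrightarrow> le (g a) (g b)" shows "dir (g ` X)"
  unfolding ia_directed_def
proof (intro conjI ballI)
  show "g ` X \<subseteq> Phi" using assms by auto
  show "g ` X \<noteq> {}" using assms(1) unfolding ia_directed_def by auto
next
  fix a b assume "a \<in> g ` X" "b \<in> g ` X"
  then obtain a' b' where "a'\<in>X" "b'\<in>X" "a = g a'" "b = g b'" by blast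
  moreover obtain c where "c\<in>X" "le a' c" "le b' c" using assms(1) calculation unfolding ia_directed_def by blast
  ultimately show "\<exists>c\<in>g ` X. le a c \<and> le b c" using assms(3) by blast
qed

lemma foc_cont: assumes X: "dir X" and s: "issup X s"
  shows "issup ((\<lambda>c. foc c x) ` X) (foc s x)" "dir ((\<lambda>c. foc c x) ` X)"
proof -
  have XP: "X \<subseteq> Phi" using X dir_sub by auto
  have sP: "s\<in>Phi" using s sup_in by auto
  show "dir ((\<lambda>c. foc c x) ` X)" using XP by (intro dir_image_mono[OF X]) (auto intro: foc_in foc_mono)
  show "issup ((\<lambda>c. foc c x) ` X) (foc s x)"
    unfolding ia_is_sup_def
  proof (intro conjI ballI impI)
    show "foc s x \<in> Phi" using foc_in sP by auto
  next
    fix a assume "a \<in> (\<lambda>c. foc c x) ` X"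
    then obtain c where "c\<in>X" "a = foc c x" by blast
    thus "le a (foc s x)" using foc_mono sup_ub[OF s] XP sP by blast
  next
    fix u assume u: "u\<in>Phi" "\<forall>a\<in>(\<lambda>c. foc c x) ` X. le a u"
    show "le (foc s x) u"
    proof (rule sup_least[OF Gam_approx[OF sP] u(1)])
      fix p assume p: "p \<in> {psi \<in> Gam. foc psi x = psi \<and> wb psi s}"
      hence "p\<in>Phi" using Gam_sub by auto
      obtain c where c: "c\<in>X" "le p c" using p X s le_refl sP unfolding ia_way_below_def by blast
      hence "le (foc p x) (foc c x)" using foc_mono XP \<open>p\<in>Phi\<close> by blast
      moreover have "foc p x = p" using p by blast
      moreover have "le (foc c x) u" using u c by blast
      moreover have "c\<in>Phi" using c XP by auto
      ultimately show "le p u" using foc_in \<open>p\<in>Phi\<close> le_trans[of p "foc c x" u] u by auto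
    qed
  qed
qed

lemma approx_dir: assumes "z\<in>Phi" shows "dir {a\<in>Gam. foc a x = a \<and> wb a z}"
  unfolding ia_directed_def
proof (intro conjI ballI)
  show "{a\<in>Gam. foc a x = a \<and> wb a z} \<subseteq> Phi" using Gam_sub by auto
  show "{a\<in>Gam. foc a x = a \<and> wb a z} \<noteq> {}" using Gam_e wb_e foc_e by blast
next
  fix a b assume a: "a \<in> {a\<in>Gam. foc a x = a \<and> wb a z}" and b: "b \<in> {a\<in>Gam. foc a x = a \<and> wb a z}"
  hence P: "a\<in>Phi" "b\<in>Phi" using Gam_sub by auto
  have "cmb a b \<in> {a\<in>Gam. foc a x = a \<and> wb a z}"
    using a b P Gam_cl foc_cmb_fix wb_join by auto
  thus "\<exists>c\<in>{a\<in>Gam. foc a x = a \<and> wb a z}. le a c \<and> le b c" using ub1 ub2 P by blast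
qed

lemma approx_foc: "phi\<in>Phi \<Longrightarrow> issup {a\<in>Gam. foc a x = a \<and> wb a (foc phi x)} (foc phi x)"
  using Gam_approx[of "foc phi x" x] foc_in foc_idem by simp

end



locale fs = P: ia Phi cP eP fP + Q: ia Psi cQ eQ fQ
  for Phi :: "'a set" and cP and eP and fP :: "'a \<Rightarrow> 'd::lattice \<Rightarrow> 'a"
  and Psi :: "'b set" and cQ and eQ and fQ :: "'b \<Rightarrow> 'e::lattice \<Rightarrow> 'b"
begin

abbreviation CM where "CM \<equiv> cont_maps Phi cP Psi cQ"
abbreviation Fc where "Fc \<equiv> fun_comb Phi cQ"
abbreviation Fu where "Fu \<equiv> fun_unit Phi eQ"
abbreviation Ff where "Ff \<equiv> fun_focus Phi fP fQ"

lemma cm_ext: "f\<in>CM \<Longrightarrow> f \<in> extensional Phi" unfolding cont_maps_def by blast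
lemma cm_in: "f\<in>CM \<Longrightarrow> a\<in>Phi \<Longrightarrow> f a \<in> Psi" unfolding cont_maps_def by blast
lemma cm_cont: "f\<in>CM \<Longrightarrow> P.dir X \<Longrightarrow> P.issup X s \<Longrightarrow> Q.issup (f ` X) (f s)"
  unfolding cont_maps_def by blast
lemma cmI: "f \<in> extensional Phi \<Longrightarrow> (\<And>a. a\<in>Phi \<Longrightarrow> f a \<in> Psi) \<Longrightarrow>
   (\<And>X s. P.dir X \<Longrightarrow> P.issup X s \<Longrightarrow> Q.issup (f ` X) (f s)) \<Longrightarrow> f\<in>CM"
  unfolding cont_maps_def by blast

lemma cm_mono: assumes "f\<in>CM" "a\<in>Phi" "b\<in>Phi" "P.le a b" shows "Q.le (f a) (f b)"
proof -
  have "P.dir {a,b}" using assms P.le_refl unfolding ia_directed_def by auto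
  moreover have "P.issup {a,b} b" using assms P.le_refl by (intro P.sup_max) auto
  ultimately have "Q.issup (f`{a,b}) (f b)" using cm_cont assms by blast
  thus ?thesis using Q.sup_ub by auto
qed

lemma cm_dir: assumes "f\<in>CM" "P.dir X" shows "Q.dir (f ` X)"
  unfolding ia_directed_def
proof (intro conjI ballI)
  have XP: "X \<subseteq> Phi" using assms P.dir_sub by auto
  show "f ` X \<subseteq> Psi" using assms XP cm_in by auto
  show "f ` X \<noteq> {}" using assms(2) unfolding ia_directed_def by auto
  fix a b assume "a \<in> f ` X" "b \<in> f ` X"
  then obtain a' b' where "a'\<in>X" "b'\<in>X" "a = f a'" "b = f b'" by blast
  moreover obtain c where "c\<in>X" "P.le a' c" "P.le b' c" using assms(2) calculation unfolding ia_directed_def by blast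
  ultimately show "\<exists>c\<in>f ` X. Q.le a c \<and> Q.le b c" using cm_mono[OF assms(1)] XP by blast
qed

lemma Fc_app: "a\<in>Phi \<Longrightarrow> Fc f g a = cQ (f a) (g a)" unfolding fun_comb_def by simp
lemma Fu_app: "a\<in>Phi \<Longrightarrow> Fu a = eQ" unfolding fun_unit_def by simp
lemma Ff_app: "a\<in>Phi \<Longrightarrow> Ff f xy a = fQ (f (fP a (fst xy))) (snd xy)" unfolding fun_focus_def by simp

lemma fle: assumes "f\<in>CM" "g\<in>CM" shows "ia_le Fc f g \<longleftrightarrow> (\<forall>a\<in>Phi. Q.le (f a) (g a))"
proof
  assume "ia_le Fc f g"
  thus "\<forall>a\<in>Phi. Q.le (f a) (g a)" unfolding ia_le_def fun_comb_def by (metis restrict_apply')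
next
  assume "\<forall>a\<in>Phi. Q.le (f a) (g a)"
  hence "Fc f g = restrict g Phi" unfolding fun_comb_def ia_le_def by (intro restrict_ext) auto
  thus "ia_le Fc f g" using extensional_restrict cm_ext assms unfolding ia_le_def by metis
qed

lemma Fc_in: assumes "f\<in>CM" "g\<in>CM" shows "Fc f g \<in> CM"
proof (rule cmI)
  show "Fc f g \<in> extensional Phi" unfolding fun_comb_def by simp
  show "\<And>a. a\<in>Phi \<Longrightarrow> Fc f g a \<in> Psi" using assms Fc_app cm_in Q.cl by simp
next
  fix X s assume X: "P.dir X" "P.issup X s"
  have XP: "X \<subseteq> Phi" using X P.dir_sub by auto
  have sP: "s\<in>Phi" using X P.sup_in by auto
  have sf: "Q.issup (f`X) (f s)" and sg: "Q.issup (g`X) (g s)" using X assms cm_cont by blast+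
  show "Q.issup (Fc f g ` X) (Fc f g s)"
    unfolding ia_is_sup_def
  proof (intro conjI ballI impI)
    show "Fc f g s \<in> Psi" using assms Fc_app cm_in Q.cl sP by simp
  next
    fix b assume "b \<in> Fc f g ` X"
    then obtain c where c: "c\<in>X" "b = cQ (f c) (g c)" using Fc_app XP by auto
    have "c\<in>Phi" using c XP by auto
    have "Q.le (f c) (f s)" "Q.le (g c) (g s)" using sf sg c Q.sup_ub by auto
    moreover have "Q.le (f s) (cQ (f s) (g s))" "Q.le (g s) (cQ (f s) (g s))"
      using Q.ub1 Q.ub2 cm_in assms sP by auto
    ultimately show "Q.le b (Fc f g s)" using c Fc_app sP Q.lub Q.le_trans cm_in assms \<open>c\<in>Phi\<close> Q.cl
      by (metis (no_types, lifting))
  next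
    fix u assume u: "u\<in>Psi" "\<forall>b\<in>Fc f g ` X. Q.le b u"
    have "Q.le (f s) u"
    proof (rule Q.sup_least[OF sf u(1)])
      fix b assume "b\<in>f`X"
      then obtain c where c: "c\<in>X" "b = f c" by blast
      hence "Q.le (cQ (f c) (g c)) u" using u Fc_app XP by (metis image_eqI subsetD)
      thus "Q.le b u" using c Q.ub1 Q.le_trans cm_in assms XP u Q.cl by (metis subsetD)
    qed
    moreover have "Q.le (g s) u"
    proof (rule Q.sup_least[OF sg u(1)])
      fix b assume "b\<in>g`X"
      then obtain c where c: "c\<in>X" "b = g c" by blast
      hence "Q.le (cQ (f c) (g c)) u" using u Fc_app XP by (metis image_eqI subsetD)
      thus "Q.le b u" using c Q.ub2 Q.le_trans cm_in assms XP u Q.cl by (metis subsetD)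
    qed
    ultimately show "Q.le (Fc f g s) u" using Fc_app sP Q.lub cm_in assms u by simp
  qed
qed

lemma Fu_in: "Fu \<in> CM"
proof (rule cmI)
  show "Fu \<in> extensional Phi" unfolding fun_unit_def by simp
  show "\<And>a. a\<in>Phi \<Longrightarrow> Fu a \<in> Psi" using Fu_app Q.e_in by simp
next
  fix X s assume X: "P.dir X" "P.issup X s"
  have XP: "X \<subseteq> Phi" using X P.dir_sub by auto
  have "X \<noteq> {}" using X unfolding ia_directed_def by auto
  then obtain x where "x\<in>X" by blast
  hence "Fu ` X = {eQ}" using XP Fu_app by (auto intro!: rev_image_eqI[of x])
  moreover have "Fu s = eQ" using X P.sup_in Fu_app by auto
  ultimately show "Q.issup (Fu ` X) (Fu s)" using Q.e_in Q.le_refl by (intro Q.sup_max) auto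
qed

lemma Ff_in: assumes "f\<in>CM" shows "Ff f xy \<in> CM"
proof (rule cmI)
  show "Ff f xy \<in> extensional Phi" unfolding fun_focus_def by simp
  show "\<And>a. a\<in>Phi \<Longrightarrow> Ff f xy a \<in> Psi" using assms Ff_app cm_in Q.foc_in P.foc_in by simp
next
  fix X s assume X: "P.dir X" "P.issup X s"
  have XP: "X \<subseteq> Phi" using X P.dir_sub by auto
  define Y where "Y = (\<lambda>c. fP c (fst xy)) ` X"
  have Y: "P.dir Y" "P.issup Y (fP s (fst xy))" using P.foc_cont X Y_def by auto
  have Z: "Q.dir (f ` Y)" "Q.issup (f ` Y) (f (fP s (fst xy)))" using cm_dir cm_cont assms Y by auto
  have "Q.issup ((\<lambda>c. fQ c (snd xy)) ` f ` Y) (fQ (f (fP s (fst xy))) (snd xy))"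
    using Q.foc_cont Z by auto
  moreover have "(\<lambda>c. fQ c (snd xy)) ` f ` Y = Ff f xy ` X"
    unfolding Y_def image_image
  proof (rule image_cong)
    fix c assume "c\<in>X" thus "fQ (f (fP c (fst xy))) (snd xy) = Ff f xy c" using XP Ff_app[of c f xy] by auto
  qed simp
  moreover have "Ff f xy s = fQ (f (fP s (fst xy))) (snd xy)" using Ff_app X P.sup_in by auto
  ultimately show "Q.issup (Ff f xy ` X) (Ff f xy s)" by simp
qed

end



context fs begin

lemma fun_eq: "f \<in> extensional Phi \<Longrightarrow> g \<in> extensional Phi \<Longrightarrow> (\<And>a. a\<in>Phi \<Longrightarrow> f a = g a) \<Longrightarrow> f = g"
  by (rule extensionalityI)

lemma Fc_ext: "Fc f g \<in> extensional Phi" unfolding fun_comb_def by simp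
lemma Ff_ext: "Ff f xy \<in> extensional Phi" unfolding fun_focus_def by simp

lemma IAF: "info_alg CM Fc Fu Ff"
  unfolding info_alg_def
proof (intro conjI ballI allI)
  fix f g assume "f\<in>CM" "g\<in>CM" thus "Fc f g \<in> CM" by (rule Fc_in)
next
  show "Fu \<in> CM" by (rule Fu_in)
next
  fix f xy assume "f\<in>CM" thus "Ff f xy \<in> CM" by (rule Ff_in)
next
  fix f g h assume A: "f\<in>CM" "g\<in>CM" "h\<in>CM"
  show "Fc (Fc f g) h = Fc f (Fc g h)"
    by (rule fun_eq[OF Fc_ext Fc_ext]) (simp add: Fc_app Q.assoc cm_in A)
next
  fix f g assume A: "f\<in>CM" "g\<in>CM"
  show "Fc f g = Fc g f"
    by (rule fun_eq[OF Fc_ext Fc_ext]) (simp add: Fc_app cm_in A Q.comm)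
next
  fix f assume A: "f\<in>CM"
  show "Fc f Fu = f"
    by (rule fun_eq[OF Fc_ext cm_ext[OF A]]) (simp add: Fc_app Fu_app cm_in A Q.neut)
next
  fix f x y assume A: "f\<in>CM"
  show "Ff (Ff f y) x = Ff f (inf x y)"
  proof (rule fun_eq[OF Ff_ext Ff_ext])
    fix a assume a: "a\<in>Phi"
    have "Ff (Ff f y) x a = fQ (fQ (f (fP (fP a (fst x)) (fst y))) (snd y)) (snd x)"
      using a P.foc_in Ff_app by simp
    also have "\<dots> = fQ (f (fP a (inf (fst y) (fst x)))) (inf (snd x) (snd y))"
      using a P.foc_in P.foc_foc Q.foc_foc cm_in A by simp
    also have "\<dots> = Ff f (inf x y) a" using a Ff_app by (simp add: inf_commute)
    finally show "Ff (Ff f y) x a = Ff f (inf x y) a" .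
  qed
next
  fix f g xy assume A: "f\<in>CM" "g\<in>CM"
  show "Ff (Fc (Ff f xy) g) xy = Fc (Ff f xy) (Ff g xy)"
  proof (rule fun_eq[OF Ff_ext Fc_ext])
    fix a assume a: "a\<in>Phi"
    have aa: "fP a (fst xy) \<in> Phi" using a P.foc_in by auto
    have "Ff (Fc (Ff f xy) g) xy a = fQ (cQ (fQ (f (fP (fP a (fst xy)) (fst xy))) (snd xy)) (g (fP a (fst xy)))) (snd xy)"
      using a aa Ff_app Fc_app by simp
    also have "\<dots> = fQ (cQ (fQ (f (fP a (fst xy))) (snd xy)) (g (fP a (fst xy)))) (snd xy)"
      using a P.foc_idem by simp
    also have "\<dots> = cQ (fQ (f (fP a (fst xy))) (snd xy)) (fQ (g (fP a (fst xy))) (snd xy))"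
      using Q.foc_cmb cm_in A aa by simp
    also have "\<dots> = Fc (Ff f xy) (Ff g xy) a" using a Ff_app Fc_app by simp
    finally show "Ff (Fc (Ff f xy) g) xy a = Fc (Ff f xy) (Ff g xy) a" .
  qed
next
  fix f assume A: "f\<in>CM"
  have "Ff f (P.tp, Q.tp) = f"
    by (rule fun_eq[OF Ff_ext cm_ext[OF A]]) (simp add: Ff_app P.foc_top Q.foc_top cm_in A)
  thus "\<exists>xy. Ff f xy = f" by blast
next
  fix f xy assume A: "f\<in>CM"
  show "Fc f (Ff f xy) = f"
  proof (rule fun_eq[OF Fc_ext cm_ext[OF A]])
    fix a assume a: "a\<in>Phi"
    have aa: "fP a (fst xy) \<in> Phi" using a P.foc_in by auto
    have "Q.le (f (fP a (fst xy))) (f a)" using cm_mono A aa a P.foc_le by blast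
    hence "Q.le (fQ (f (fP a (fst xy))) (snd xy)) (f a)"
      using Q.foc_le Q.le_trans cm_in A aa a Q.foc_in by blast
    thus "Fc f (Ff f xy) a = f a" using a Fc_app Ff_app Q.le_cmb_iff cm_in A aa Q.foc_in by simp
  qed
qed

sublocale F: ia0 CM Fc Fu Ff by (rule ia0.intro, rule IAF)

end



context fs begin

lemma cm_dir_pt: assumes F: "F.dir F" and a: "a\<in>Phi" shows "Q.dir ((\<lambda>h. h a) ` F)"
  unfolding ia_directed_def
proof (intro conjI ballI)
  have FC: "F \<subseteq> CM" using F F.dir_sub by auto
  show "(\<lambda>h. h a) ` F \<subseteq> Psi" using FC cm_in a by auto
  show "(\<lambda>h. h a) ` F \<noteq> {}" using F unfolding ia_directed_def by auto
  fix b c assume "b \<in> (\<lambda>h. h a) ` F" "c \<in> (\<lambda>h. h a) ` F"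
  then obtain g h where gh: "g\<in>F" "h\<in>F" "b = g a" "c = h a" by blast
  moreover obtain k where "k\<in>F" "F.le g k" "F.le h k" using F gh unfolding ia_directed_def by blast
  ultimately show "\<exists>d\<in>(\<lambda>h. h a) ` F. Q.le b d \<and> Q.le c d" using fle FC a by blast
qed

definition psup where "psup F = (\<lambda>a\<in>Phi. SOME s. Q.issup ((\<lambda>h. h a) ` F) s)"

lemma psup_app: assumes F: "F.dir F" and a: "a\<in>Phi" shows "Q.issup ((\<lambda>h. h a) ` F) (psup F a)"
proof -
  obtain s where "Q.issup ((\<lambda>h. h a) ` F) s" using Q.dcpo cm_dir_pt F a by blast
  thus ?thesis unfolding psup_def using a by (simp add: someI)
qed

lemma psup_cm: assumes F: "F.dir F" shows "psup F \<in> CM" "F.issup F (psup F)"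
proof -
  have FC: "F \<subseteq> CM" using F F.dir_sub by auto
  show C: "psup F \<in> CM"
  proof (rule cmI)
    show "psup F \<in> extensional Phi" unfolding psup_def by simp
    show "\<And>a. a\<in>Phi \<Longrightarrow> psup F a \<in> Psi" using psup_app F Q.sup_in by blast
  next
    fix X s assume X: "P.dir X" "P.issup X s"
    have XP: "X \<subseteq> Phi" using X P.dir_sub by auto
    have sP: "s\<in>Phi" using X P.sup_in by auto
    have Ss: "Q.issup ((\<lambda>h. h s) ` F) (psup F s)" using psup_app F sP by blast
    show "Q.issup (psup F ` X) (psup F s)"
      unfolding ia_is_sup_def
    proof (intro conjI ballI impI)
      show "psup F s \<in> Psi" using Ss Q.sup_in by blast
    next
      fix b assume "b \<in> psup F ` X"
      then obtain c where c: "c\<in>X" "b = psup F c" by blast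
      have cP: "c\<in>Phi" using c XP by auto
      show "Q.le b (psup F s)"
        unfolding c(2)
      proof (rule Q.sup_least[OF psup_app[OF F cP] Q.sup_in[OF Ss]])
        fix d assume "d \<in> (\<lambda>h. h c) ` F"
        then obtain h where h: "h\<in>F" "d = h c" by blast
        have "Q.le (h c) (h s)" using cm_mono FC h cP sP P.sup_ub X c by blast
        moreover have "Q.le (h s) (psup F s)" using Ss h Q.sup_ub by blast
        ultimately show "Q.le d (psup F s)" using h Q.le_trans cm_in FC cP sP Q.sup_in[OF Ss] by blast
      qed
    next
      fix u assume u: "u\<in>Psi" "\<forall>b\<in>psup F ` X. Q.le b u"
      show "Q.le (psup F s) u"
      proof (rule Q.sup_least[OF Ss u(1)])
        fix d assume "d \<in> (\<lambda>h. h s) ` F"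
        then obtain h where h: "h\<in>F" "d = h s" by blast
        have hc: "h\<in>CM" using h FC by auto
        show "Q.le d u" unfolding h(2)
        proof (rule Q.sup_least[OF cm_cont[OF hc X] u(1)])
          fix b assume "b \<in> h ` X"
          then obtain c where c: "c\<in>X" "b = h c" by blast
          have cP: "c\<in>Phi" using c XP by auto
          have "Q.le (h c) (psup F c)" using psup_app[OF F cP] h Q.sup_ub by blast
          moreover have "Q.le (psup F c) u" using u c by blast
          ultimately show "Q.le b u" using c Q.le_trans cm_in hc cP u Q.sup_in psup_app F by blast
        qed
      qed
    qed
  qed
  show "F.issup F (psup F)"
    unfolding ia_is_sup_def
  proof (intro conjI ballI impI)
    show "psup F \<in> CM" by (rule C)
  next
    fix h assume h: "h\<in>F"
    show "F.le h (psup F)" using fle[of h "psup F"] h FC C psup_app[OF F] Q.sup_ub by blast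
  next
    fix u assume u: "u\<in>CM" "\<forall>h\<in>F. F.le h u"
    show "F.le (psup F) u" unfolding fle[OF C u(1)]
    proof
      fix a assume a: "a\<in>Phi"
      show "Q.le (psup F a) (u a)"
      proof (rule Q.sup_least[OF psup_app[OF F a] cm_in[OF u(1) a]])
        fix d assume "d \<in> (\<lambda>h. h a) ` F"
        then obtain h where "h\<in>F" "d = h a" by blast
        thus "Q.le d (u a)" using u fle FC a by blast
      qed
    qed
  qed
qed

lemma F_sup_pt: assumes F: "F.dir F" and G: "F.issup F G" and a: "a\<in>Phi"
  shows "Q.issup ((\<lambda>h. h a) ` F) (G a)"
proof -
  have "G = psup F" using F.sup_unique G psup_cm F by blast
  thus ?thesis using psup_app F a by simp
qed

definition step where "step a b x = (\<lambda>p\<in>Phi. if P.wb a (fP p x) then b else eQ)"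

lemma step_cm: assumes a: "a\<in>Phi" and b: "b\<in>Psi" shows "step a b x \<in> CM"
proof (rule cmI)
  show "step a b x \<in> extensional Phi" unfolding step_def by simp
  show "\<And>p. p\<in>Phi \<Longrightarrow> step a b x p \<in> Psi" using b Q.e_in unfolding step_def by simp
next
  fix X s assume X: "P.dir X" "P.issup X s"
  have XP: "X \<subseteq> Phi" using X P.dir_sub by auto
  have sP: "s\<in>Phi" using X P.sup_in by auto
  have mono: "P.wb a (fP c x) \<Longrightarrow> P.wb a (fP s x)" if "c\<in>X" for c
    using P.wb_mono[of a a "fP c x" "fP s x"] a P.foc_in XP sP that P.le_refl P.foc_mono P.sup_ub X by blast
  show "Q.issup (step a b x ` X) (step a b x s)"
  proof (cases "P.wb a (fP s x)")
    case True
    then obtain a' where a': "a'\<in>P.Gam" "P.wb a a'" "P.wb a' (fP s x)" using P.interp a sP P.foc_in by blast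
    have "P.dir ((\<lambda>c. fP c x) ` X)" "P.issup ((\<lambda>c. fP c x) ` X) (fP s x)" using P.foc_cont X by auto
    then obtain c where c: "c\<in>X" "P.le a' (fP c x)"
      using a'(3) P.le_refl P.foc_in sP unfolding ia_way_below_def by blast
    have "P.wb a (fP c x)" using P.wb_mono[of a a a' "fP c x"] a a' c P.Gam_sub P.foc_in XP P.le_refl by blast
    hence e1: "step a b x c = b" using c XP unfolding step_def by auto
    have e2: "step a b x s = b" using True sP unfolding step_def by auto
    show ?thesis unfolding e2
    proof (rule Q.sup_max)
      show "b \<in> step a b x ` X" using e1 c by (metis image_eqI)
      show "b\<in>Psi" by (rule b)
      show "\<forall>d\<in>step a b x ` X. Q.le d b" using b Q.le_refl Q.le_e XP by (auto simp: step_def)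
    qed
  next
    case False
    hence "\<And>c. c\<in>X \<Longrightarrow> step a b x c = eQ" using mono XP unfolding step_def by auto
    moreover have "X \<noteq> {}" using X unfolding ia_directed_def by auto
    ultimately have "step a b x ` X = {eQ}" by (auto intro: rev_image_eqI)
    moreover have "step a b x s = eQ" using False sP unfolding step_def by auto
    ultimately show ?thesis using Q.e_in Q.le_refl by (intro Q.sup_max) auto
  qed
qed

lemma step_fix: assumes a: "a\<in>Phi" and b: "b\<in>Psi" "fQ b y = b" shows "Ff (step a b x) (x,y) = step a b x"
proof (rule fun_eq[OF Ff_ext])
  show "step a b x \<in> extensional Phi" unfolding step_def by simp
  fix p assume p: "p\<in>Phi"
  show "Ff (step a b x) (x,y) p = step a b x p"
    using p P.foc_in P.foc_idem b Q.foc_e Ff_app unfolding step_def by simp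
qed

lemma step_wb: assumes a: "a\<in>Phi" and b: "b\<in>Psi" and f: "f\<in>CM" and w: "Q.wb b (f a)"
  shows "F.wb (step a b x) f"
  unfolding ia_way_below_def
proof (intro allI impI)
  fix F G assume F: "F.dir F" "F.issup F G" "F.le f G"
  have FC: "F \<subseteq> CM" using F F.dir_sub by auto
  have GC: "G \<in> CM" using F F.sup_in by auto
  have "Q.issup ((\<lambda>h. h a) ` F) (G a)" using F_sup_pt F a by blast
  moreover have "Q.le (f a) (G a)" using F fle f GC a by blast
  ultimately obtain h where h: "h\<in>F" "Q.le b (h a)"
    using w cm_dir_pt F a unfolding ia_way_below_def by blast
  have hC: "h\<in>CM" using h FC by auto
  have "F.le (step a b x) h" unfolding fle[OF step_cm[OF a b] hC]
  proof
    fix p assume p: "p\<in>Phi"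
    show "Q.le (step a b x p) (h p)"
    proof (cases "P.wb a (fP p x)")
      case True
      hence "P.le a (fP p x)" using P.wb_le P.foc_in p by blast
      hence "P.le a p" using P.le_trans P.foc_le P.foc_in p a by blast
      hence "Q.le (h a) (h p)" using cm_mono hC a p by blast
      hence "Q.le b (h p)" using h Q.le_trans b cm_in hC a p by blast
      thus ?thesis using True p unfolding step_def by simp
    next
      case False thus ?thesis using p Q.le_e cm_in hC unfolding step_def by simp
    qed
  qed
  thus "\<exists>c\<in>F. F.le (step a b x) c" using h by blast
qed

end



context fs begin

lemma main_sup: assumes f: "f\<in>CM" shows "F.issup {g\<in>CM. Ff g xy = g \<and> F.wb g f} (Ff f xy)"
proof -
  obtain x y where xy: "xy = (x,y)" by (cases xy)
  show ?thesis
    unfolding ia_is_sup_def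
  proof (intro conjI ballI impI)
    show "Ff f xy \<in> CM" using Ff_in f by blast
  next
    fix g assume g: "g \<in> {g\<in>CM. Ff g xy = g \<and> F.wb g f}"
    hence "F.le g f" using F.wb_le[of g f] f by blast
    hence "F.le (Ff g xy) (Ff f xy)" using F.foc_mono[of g f xy] g f by blast
    thus "F.le g (Ff f xy)" using g by simp
  next
    fix u assume u: "u\<in>CM" "\<forall>g\<in>{g\<in>CM. Ff g xy = g \<and> F.wb g f}. F.le g u"
    show "F.le (Ff f xy) u" unfolding fle[OF Ff_in[OF f] u(1)]
    proof
      fix p assume p: "p\<in>Phi"
      define z where "z = fP p x"
      have zP: "z\<in>Phi" using p P.foc_in z_def by auto
      define w where "w = f z"
      have wP: "w\<in>Psi" using cm_in f zP w_def by auto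
      have "Q.le (fQ w y) (u p)"
      proof (rule Q.sup_least[OF Q.Gam_approx[OF wP] cm_in[OF u(1) p]])
        fix b assume b: "b \<in> {psi \<in> Q.Gam. fQ psi y = psi \<and> Q.wb psi w}"
        hence bP: "b\<in>Psi" using Q.Gam_sub by auto
        have "Q.wb b w" using b by blast
        then obtain b' where b': "b'\<in>Q.Gam" "Q.wb b b'" "Q.wb b' w" using Q.interp[OF bP wP] by blast
        have b'P: "b'\<in>Psi" using b' Q.Gam_sub by auto
        define S where "S = {a\<in>P.Gam. fP a x = a \<and> P.wb a (fP p x)}"
        have S1: "P.dir S" unfolding S_def z_def[symmetric] by (rule P.approx_dir[OF zP])
        have S2: "P.issup S z" unfolding S_def z_def by (rule P.approx_foc[OF p])
        have "Q.dir (f`S)" by (rule cm_dir[OF f S1])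
        moreover have "Q.issup (f`S) w" unfolding w_def by (rule cm_cont[OF f S1 S2])
        ultimately have "\<exists>c\<in>f`S. Q.le b' c"
          using b'(3)[unfolded ia_way_below_def, rule_format, OF _ _ Q.le_refl[OF wP]] by blast
        then obtain c where c: "c \<in> f`S" "Q.le b' c" by blast
        then obtain a where a: "a\<in>S" "c = f a" by blast
        have aP: "a\<in>Phi" using a P.Gam_sub S_def by auto
        have fa: "f a \<in> Psi" by (rule cm_in[OF f aP])
        have "Q.le b' (f a)" using c a by simp
        hence "Q.wb b (f a)" by (rule Q.wb_mono[OF bP bP b'P fa Q.le_refl[OF bP] b'(2)])
        hence gw: "F.wb (step a b x) f" by (rule step_wb[OF aP bP f])
        have fb: "fQ b y = b" using b by simp
        have "Ff (step a b x) xy = step a b x" unfolding xy by (rule step_fix[OF aP bP fb])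
        hence "step a b x \<in> {g\<in>CM. Ff g xy = g \<and> F.wb g f}" using gw step_cm[OF aP bP] by simp
        hence "F.le (step a b x) u" using u(2) by blast
        hence "Q.le (step a b x p) (u p)" using fle[OF step_cm[OF aP bP] u(1)] p by blast
        moreover have "step a b x p = b" using a p unfolding S_def step_def by simp
        ultimately show "Q.le b (u p)" by simp
      qed
      thus "Q.le (Ff f xy p) (u p)" using Ff_app p xy z_def w_def by simp
    qed
  qed
qed

lemma SCF: "s_continuous CM Fc Fu Ff"
proof -
  have T: "\<exists>t::'d \<times> 'e. \<forall>xy. xy \<le> t"
  proof (intro exI allI)
    fix xy :: "'d \<times> 'e"
    show "xy \<le> (P.tp, Q.tp)" using P.tp Q.tp by (cases xy) simp
  qed
  have G: "CM \<subseteq> CM \<and> Fu \<in> CM \<and> (\<forall>a\<in>CM. \<forall>b\<in>CM. Fc a b \<in> CM) \<and>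
    (\<forall>X. X \<subseteq> CM \<longrightarrow> F.dir X \<longrightarrow> (\<exists>s. F.issup X s)) \<and>
    (\<forall>phi\<in>CM. \<forall>x. F.issup {psi \<in> CM. Ff psi x = psi \<and> F.wb psi phi} (Ff phi x))"
  proof (intro conjI allI ballI impI)
    show "CM \<subseteq> CM" by simp
    show "Fu \<in> CM" by (rule Fu_in)
  next
    fix a b assume "a\<in>CM" "b\<in>CM" thus "Fc a b \<in> CM" by (rule Fc_in)
  next
    fix X assume "X \<subseteq> CM" "F.dir X" thus "\<exists>s. F.issup X s" using psup_cm(2) by blast
  next
    fix phi x assume "phi\<in>CM" thus "F.issup {psi \<in> CM. Ff psi x = psi \<and> F.wb psi phi} (Ff phi x)"
      by (rule main_sup)
  qed
  show ?thesis unfolding s_continuous_def apply (rule conjI[OF T]) apply (rule exI[of _ CM]) by (rule G)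
qed

end

theorem theorem3p14:
  fixes Phi :: "'a set" and cP :: "'a \<Rightarrow> 'a \<Rightarrow> 'a" and eP :: 'a
    and fP :: "'a \<Rightarrow> 'd::lattice \<Rightarrow> 'a"
    and Psi :: "'b set" and cQ :: "'b \<Rightarrow> 'b \<Rightarrow> 'b" and eQ :: 'b
    and fQ :: "'b \<Rightarrow> 'e::lattice \<Rightarrow> 'b"
  assumes "info_alg Phi cP eP fP" and "s_continuous Phi cP eP fP"
    and "info_alg Psi cQ eQ fQ" and "s_continuous Psi cQ eQ fQ"
  shows "info_alg (cont_maps Phi cP Psi cQ) (fun_comb Phi cQ) (fun_unit Phi eQ)
           (fun_focus Phi fP fQ)
       \<and> s_continuous (cont_maps Phi cP Psi cQ) (fun_comb Phi cQ) (fun_unit Phi eQ)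
           (fun_focus Phi fP fQ)"
proof -
  interpret fs Phi cP eP fP Psi cQ eQ fQ
    unfolding fs_def ia_def ia0_def ia_axioms_def using assms by blast
  show ?thesis using IAF SCF by blast
qed



end
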